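(* Let $A$ be a random variable with values in $\{u,v\}$, $\mathbb{P}(A=u)=p_u$, $\mathbb{P}(A=v)=p_v$, $p_u+p_v=1$, and let $(U,V)$ be independent of $A$ and follow a bivariate $t$ distribution with location vector $(\mu,\mu)$, scale matrix $\Sigma=\begin{pmatrix}\sigma^2&\rho\sigma^2\\ \rho\sigma^2&\sigma^2\end{pmatrix}$ with $\sigma>0$, and degrees of freedom $\delta>2$. Let \[f(z)=p_u\,\mathbb{P}(U>z)\,\mathbb{E}[U+V\mid U>z]+p_v\,\mathbb{P}(V>z)\,\mathbb{E}[U+V\mid V>z].\] Then \[f(z)=2\mu\left(1-T_\delta\left(\frac{z-\mu}{\sigma};0,1\right)\right)+\sigma(1+\rho)\left(\frac{\delta}{\delta-2}\right)t_{\delta-2}\left(\frac{z-\mu}{\sigma};0,\frac{\delta}{\delta-2}\right).\]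
   Context: For $\nu>0$, $t_\nu(x;m,s^2)=\frac{\Gamma\left(\frac{\nu+1}{2}\right)}{\sqrt{s^2\nu\pi}\,\Gamma\left(\frac{\nu}{2}\right)}\left(1+\frac{(x-m)^2}{s^2\nu}\right)^{-\frac{\nu+1}{2}}$ is the density of the univariate $t$ distribution with $\nu$ degrees of freedom, location $m$ and squared scale $s^2$, and $T_\nu(\cdot;m,s^2)$ is its CDF. The bivariate $t$ distribution with location $m$, scale matrix $\Sigma$ and $\delta$ degrees of freedom has density proportional to $\left(1+(x-m)^\top\Sigma^{-1}(x-m)/\delta\right)^{-(\delta+2)/2}$. *)

theory Defs
  imports "HOL-Probability.Probability"
begin

text \<open>Density of the univariate t distribution with nu degrees of freedom,
  location m and squared scale s2.\<close>
definition t_dens :: "real \<Rightarrow> real \<Rightarrow> real \<Rightarrow> real \<Rightarrow> real" where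
  "t_dens \<nu> m s2 x =
     Gamma ((\<nu> + 1) / 2) / (sqrt (s2 * \<nu> * pi) * Gamma (\<nu> / 2))
     * (1 + (x - m)\<^sup>2 / (s2 * \<nu>)) powr (- ((\<nu> + 1) / 2))"

definition t_cdf :: "real \<Rightarrow> real \<Rightarrow> real \<Rightarrow> real \<Rightarrow> real" where
  "t_cdf \<nu> m s2 x = (LINT y|lborel. indicator {..x} y * t_dens \<nu> m s2 y)"

text \<open>Density of the bivariate t distribution with location (m1,m2),
  symmetric positive definite scale matrix [[s11,s12],[s12,s22]] and delta degrees
  of freedom:  Gamma((delta+2)/2) / (Gamma(delta/2) delta pi sqrt(det Sigma))
  * (1 + (x-m)^T Sigma^-1 (x-m)/delta)^(-(delta+2)/2).\<close>
definition bvt_dens :: "real \<Rightarrow> real \<Rightarrow> real \<Rightarrow> real \<Rightarrow> real \<Rightarrow> real \<Rightarrow> real \<times> real \<Rightarrow> real" where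
  "bvt_dens m1 m2 s11 s12 s22 \<delta> xy =
     (let d = s11 * s22 - s12\<^sup>2; a = fst xy - m1; b = snd xy - m2;
          q = (s22 * a\<^sup>2 - 2 * s12 * a * b + s11 * b\<^sup>2) / d
      in Gamma ((\<delta> + 2) / 2) / (Gamma (\<delta> / 2) * \<delta> * pi * sqrt d)
         * (1 + q / \<delta>) powr (- ((\<delta> + 2) / 2)))"

definition cond_exp_event :: "'a measure \<Rightarrow> ('a \<Rightarrow> real) \<Rightarrow> 'a set \<Rightarrow> real" where
  "cond_exp_event M X B = (LINT \<omega>|M. X \<omega> * indicator B \<omega>) / measure M B"

end

theory Submission
  imports Defs "HOL-Real_Asymp.Real_Asymp"
begin

lemma kern_half:
  fixes c :: real
  assumes c: "c > 1/2"
  shows "set_integrable lborel {0<..} (\<lambda>t::real. (1+t\<^sup>2) powr (-c))"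
    and "(LINT t:{0<..}|lborel. (1+t\<^sup>2) powr (-c)) = Beta (1/2) (c - 1/2) / 2"
proof -
  define g where "g = (\<lambda>s::real. sqrt (s/(1-s)))"
  define g' where "g' = (\<lambda>s::real. 1 / (2 * sqrt (s/(1-s)) * (1-s)^2))"
  define f where "f = (\<lambda>t::real. (1+t\<^sup>2) powr (-c))"
  define B where "B = (\<lambda>s::real. s powr (1/2 - 1) * (1 - s) powr ((c - 1/2) - 1))"
  have eq: "f (g s) * g' s = B s / 2" if "0 < s" "s < 1" for s
  proof -
    have s1: "1 - s > 0" using that by simp
    have "1 + (g s)\<^sup>2 = 1 / (1 - s)" using that by (simp add: g_def field_simps)
    then have fg: "f (g s) = (1 - s) powr c" using s1 by (simp add: f_def powr_minus_divide powr_divide)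
    have sq: "sqrt (s/(1-s)) = s powr (1/2) / (1-s) powr (1/2)"
      using that s1 by (simp add: powr_half_sqrt[symmetric] powr_divide)
    have p2: "(1-s)^2 = (1-s) powr 2"
      using s1 by (simp add: powr_numeral)
    have "g' s = 1 / (2 * (s powr (1/2) / (1-s) powr (1/2)) * (1-s) powr 2)"
      unfolding g'_def sq p2 by simp
    also have "\<dots> = (1 - s) powr (1/2) * (1-s) powr (-2) * s powr (-1/2) / 2"
      using that s1 by (simp add: powr_minus field_simps)
    finally have "g' s = (1 - s) powr (1/2) * (1-s) powr (-2) * s powr (-1/2) / 2" .
    moreover note fg
    ultimately have "f (g s) * g' s = ((1 - s) powr c * (1 - s) powr (1/2) * (1-s) powr (-2)) * s powr (-1/2) / 2"
      by simp
    also have "(1 - s) powr c * (1 - s) powr (1/2) * (1-s) powr (-2) = (1-s) powr (c - 3/2)"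
      using s1 by (simp add: powr_add[symmetric])
    finally show ?thesis by (simp add: B_def)
  qed
  have eq2: "B s = f (g s) * (g' s * 2)" if "0 < s" "s < 1" for s
    using eq[OF that] by simp
  have intB: "set_integrable lborel {0<..<1} B"
    unfolding B_def
    by (rule set_integrable_subset[OF integrable_Beta]) (use c in auto)
  have intB2: "set_integrable lborel (einterval 0 1) (\<lambda>s. f (g s) * g' s)"
  proof -
    have "set_integrable lborel {0<..<1} (\<lambda>s. B s / 2)"
      using intB by (simp add: set_integrable_divide)
    then show ?thesis
      unfolding set_integrable_def zero_ereal_def one_ereal_def einterval_eq_Icc
      by (rule iffD1[OF Bochner_Integration.integrable_cong[OF refl], rotated]) (auto simp: eq2 indicator_def)
  qed
  have valB: "(LBINT s=0..1. f (g s) * g' s) = Beta (1/2) (c - 1/2) / 2"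
  proof -
    have "(LBINT s=0..1. f (g s) * g' s) = (LBINT s:{0<..<1}. f (g s) * g' s)"
      unfolding zero_ereal_def one_ereal_def by (simp add: interval_lebesgue_integral_def)
    also have "\<dots> = (LBINT s:{0<..<1}. B s / 2)"
      unfolding set_lebesgue_integral_def
      by (rule Bochner_Integration.integral_cong) (auto simp: eq2 indicator_def)
    also have "\<dots> = (LBINT s:{0<..<1}. B s) / 2"
      by (simp add: set_integral_divide_zero)
    also have "(LBINT s:{0<..<1}. B s) = (LBINT s:{0..1}. B s)"
      by (rule set_integral_discrete_difference[where X="{0,1}"]) auto
    also have "\<dots> = integral {0..1} B"
      unfolding B_def by (rule set_borel_integral_eq_integral(2)[OF integrable_Beta]) (use c in auto)
    also have "\<dots> = Beta (1/2) (c - 1/2)"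
      unfolding B_def using has_integral_Beta_real[of "1/2" "c - 1/2"] c by (simp add: integral_unique)
    finally show ?thesis .
  qed
  have sub:
    "set_integrable lborel (einterval 0 \<infinity>) f \<and> (LBINT x=0..\<infinity>. f x) = (LBINT s=0..1. f (g s) * g' s)"
  proof (intro conjI)
    note thms = interval_integral_substitution_nonneg[of 0 1 g g' f 0 \<infinity>]
    have d: "DERIV g x :> g' x" if "0 < x" "x < 1" for x
      using that unfolding g_def g'_def
      by (auto intro!: derivative_eq_intros simp: field_simps power2_eq_square)
    have cf: "isCont f (g x)" for x
      unfolding f_def by (intro continuous_intros) (smt (verit) zero_le_power2)
    have cg: "isCont g' x" if "0 < x" "x < 1" for x
      using that unfolding g'_def by (intro continuous_intros) auto
    have nn: "0 \<le> f (g x)" for x by (simp add: f_def)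
    have gn: "0 \<le> g' x" if "0 \<le> x" "x \<le> 1" for x
      using that unfolding g'_def by auto
    have A: "((ereal \<circ> g \<circ> real_of_ereal) \<longlongrightarrow> 0) (at_right 0)"
      unfolding zero_ereal_def comp_assoc[symmetric] ereal_tendsto_simps g_def
      by (rule tendsto_eq_intros | simp)+
    have Bl: "((ereal \<circ> g \<circ> real_of_ereal) \<longlongrightarrow> \<infinity>) (at_left 1)"
      unfolding one_ereal_def comp_assoc[symmetric] ereal_tendsto_simps g_def
      by real_asymp
    show "set_integrable lborel (einterval 0 \<infinity>) f"
      using thms d cf cg nn gn A Bl intB2 by (auto simp: zero_ereal_def one_ereal_def)
    show "(LBINT x=0..\<infinity>. f x) = (LBINT s=0..1. f (g s) * g' s)"
      using thms d cf cg nn gn A Bl intB2 by (auto simp: zero_ereal_def one_ereal_def)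
  qed
  show "set_integrable lborel {0<..} (\<lambda>t::real. (1+t\<^sup>2) powr (-c))"
    using sub unfolding f_def zero_ereal_def by simp
  show "(LINT t:{0<..}|lborel. (1+t\<^sup>2) powr (-c)) = Beta (1/2) (c - 1/2) / 2"
    using sub valB unfolding f_def by (simp add: interval_lebesgue_integral_0_infty)
qed

lemma even_int:
  fixes f :: "real \<Rightarrow> real"
  assumes fi: "set_integrable lborel {0<..} f" and ev: "\<And>x. f (-x) = f x"
  shows "integrable lborel f" "integral\<^sup>L lborel f = 2 * (LINT x:{0<..}|lborel. f x)"
proof -
  define h where "h = (\<lambda>x. indicator {0<..} x * f x)"
  have hi: "integrable lborel h" using fi unfolding h_def set_integrable_def by simp
  have h2i: "integrable lborel (\<lambda>x. h (0 + (-1) * x))"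
    by (rule lborel_integrable_real_affine[OF hi]) simp
  have h2v: "integral\<^sup>L lborel (\<lambda>x. h (0 + (-1) * x)) = integral\<^sup>L lborel h"
    using lborel_integral_real_affine[of "-1" h 0] by simp
  have eq: "h x + h (- x) = f x" if "x \<noteq> 0" for x
    using that ev[of x] by (auto simp: h_def indicator_def)
  have si: "integrable lborel (\<lambda>x. h x + h (0 + (-1) * x))" using hi h2i by simp
  show fint: "integrable lborel f"
    using si by (subst (asm) integrable_discrete_difference[where X="{0}" and g=f]) (auto simp: eq)
  have "integral\<^sup>L lborel f = integral\<^sup>L lborel (\<lambda>x. h x + h (0 + (-1) * x))"
    by (rule integral_discrete_difference[where X="{0}"]) (auto simp: eq)
  also have "\<dots> = 2 * integral\<^sup>L lborel h" using hi h2i h2v by simp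
  finally show "integral\<^sup>L lborel f = 2 * (LINT x:{0<..}|lborel. f x)"
    by (simp add: h_def set_lebesgue_integral_def)
qed

lemma odd_int:
  fixes f :: "real \<Rightarrow> real"
  assumes od: "\<And>x. f (-x) = - f x"
  shows "integral\<^sup>L lborel f = 0"
proof -
  have "integral\<^sup>L lborel f = integral\<^sup>L lborel (\<lambda>x. f (0 + (-1) * x))"
    using lborel_integral_real_affine[of "-1" f 0] by simp
  also have "\<dots> = - integral\<^sup>L lborel f" by (simp add: od)
  finally show ?thesis by simp
qed

lemma affine_int:
  fixes h :: "real \<Rightarrow> real"
  assumes s: "s > 0" and hi: "integrable lborel h"
  shows "integrable lborel (\<lambda>y. h ((y - \<nu>) / s))"
    "(\<integral>y. h ((y - \<nu>) / s) \<partial>lborel) = s * integral\<^sup>L lborel h"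
proof -
  have e: "(\<lambda>x. (\<lambda>y. h ((y - \<nu>) / s)) (\<nu> + s * x)) = h" using s by (auto simp: fun_eq_iff)
  show "integrable lborel (\<lambda>y. h ((y - \<nu>) / s))"
    using lborel_integrable_real_affine_iff[of s "\<lambda>y. h ((y - \<nu>) / s)" \<nu>] s hi e by simp
  show "(\<integral>y. h ((y - \<nu>) / s) \<partial>lborel) = s * integral\<^sup>L lborel h"
    using lborel_integral_real_affine[of s "\<lambda>y. h ((y - \<nu>) / s)" \<nu>] s e by simp
qed

lemma kern_int:
  fixes c :: real
  assumes c: "c > 1/2"
  shows "integrable lborel (\<lambda>t::real. (1+t\<^sup>2) powr (-c))"
    and "(\<integral>t. (1+t\<^sup>2) powr (-c) \<partial>lborel) = Beta (1/2) (c - 1/2)"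
  using even_int[OF kern_half(1)[OF c]] kern_half(2)[OF c] by auto

lemma kern_abs_int:
  fixes c :: real
  assumes c: "c > 1"
  shows "integrable lborel (\<lambda>t::real. \<bar>t\<bar> * (1+t\<^sup>2) powr (-c))"
    and "integrable lborel (\<lambda>t::real. t * (1+t\<^sup>2) powr (-c))"
    and "(\<integral>t. t * (1+t\<^sup>2) powr (-c) \<partial>lborel) = 0"
proof -
  have i: "integrable lborel (\<lambda>t::real. (1+t\<^sup>2) powr (-(c - 1/2)))"
    using kern_int(1)[of "c - 1/2"] c by simp
  have b: "\<bar>t\<bar> * (1+t\<^sup>2) powr (-c) \<le> (1+t\<^sup>2) powr (1/2 - c)" for t :: real
  proof -
    have p: "0 < 1 + t\<^sup>2" by (smt (verit) zero_le_power2)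
    have "\<bar>t\<bar> \<le> (1+t\<^sup>2) powr (1/2)"
      using p by (simp add: powr_half_sqrt real_le_rsqrt)
    then have "\<bar>t\<bar> * (1+t\<^sup>2) powr (-c) \<le> (1+t\<^sup>2) powr (1/2) * (1+t\<^sup>2) powr (-c)"
      by (rule mult_right_mono) simp
    also have "\<dots> = (1+t\<^sup>2) powr (1/2 - c)" using p by (simp add: powr_add[symmetric])
    finally show ?thesis .
  qed
  show ai: "integrable lborel (\<lambda>t::real. \<bar>t\<bar> * (1+t\<^sup>2) powr (-c))"
    by (rule Bochner_Integration.integrable_bound[OF i]) (auto intro!: AE_I2 simp: b abs_mult)
  show ti: "integrable lborel (\<lambda>t::real. t * (1+t\<^sup>2) powr (-c))"
    by (rule Bochner_Integration.integrable_bound[OF ai]) (auto intro!: AE_I2 simp: abs_mult)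
  show "(\<integral>t. t * (1+t\<^sup>2) powr (-c) \<partial>lborel) = 0"
    by (rule odd_int) simp
qed

lemma aux_fr: "(a::real) \<noteq> 0 \<Longrightarrow> b \<noteq> 0 \<Longrightarrow> s \<noteq> 0 \<Longrightarrow> G \<noteq> 0 \<Longrightarrow>
   X * (a * b) / (G * (a * a) * (b * b) * s) = X / (s * a * b * G)"
  by (simp add: field_simps)

locale bvt_setup =
  fixes \<mu> \<sigma> \<rho> \<delta> :: real
  assumes sig: "\<sigma> > 0" and rl: "-1 < \<rho>" and ru: "\<rho> < 1" and del: "\<delta> > 2"
begin

definition "bv x y = bvt_dens \<mu> \<mu> (\<sigma>\<^sup>2) (\<rho> * \<sigma>\<^sup>2) (\<sigma>\<^sup>2) \<delta> (x, y)"
definition "S = \<sigma> * sqrt \<delta>"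
definition "K x = 1 + ((x - \<mu>) / S)\<^sup>2"
definition "cc = (\<delta> + 2) / 2"
definition "C0 = Gamma ((\<delta> + 2) / 2) / (Gamma (\<delta> / 2) * \<delta> * pi * sqrt (\<sigma>\<^sup>2 * \<sigma>\<^sup>2 - (\<rho> * \<sigma>\<^sup>2)\<^sup>2))"
definition "nu x = \<mu> + \<rho> * (x - \<mu>)"
definition "sc x = \<sigma> * sqrt ((1 - \<rho>\<^sup>2) * \<delta>) * sqrt (K x)"
definition "P x = C0 * K x powr (- cc)"
definition "m x = t_dens \<delta> \<mu> (\<sigma>\<^sup>2) x"
definition "Cm = Gamma ((\<delta> + 1) / 2) / (sqrt (\<sigma>\<^sup>2 * \<delta> * pi) * Gamma (\<delta> / 2))"

lemma S_pos: "S > 0" using sig del by (simp add: S_def)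
lemma K_pos: "K x > 0" unfolding K_def by (smt (verit) zero_le_power2)
lemma K_ge1: "K x \<ge> 1" unfolding K_def by simp
lemma rho2: "1 - \<rho>\<^sup>2 > 0"
  using rl ru by (smt (verit) mult_less_cancel_right2 power2_eq_square mult_minus_left)
lemma sc_pos: "sc x > 0" using sig del rho2 K_pos by (simp add: sc_def)

lemma S2: "S\<^sup>2 = \<sigma>\<^sup>2 * \<delta>" using del by (simp add: S_def power_mult_distrib)

lemma sc2: "(sc x)\<^sup>2 = \<sigma>\<^sup>2 * (1 - \<rho>\<^sup>2) * \<delta> * K x"
  using del rho2 K_pos[of x] by (simp add: sc_def power_mult_distrib)

lemma bv_decomp:
  "bv x y = P x * (1 + ((y - nu x) / sc x)\<^sup>2) powr (- cc)"
proof -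
  define a where "a = x - \<mu>"
  define b where "b = y - \<mu>"
  define d where "d = \<sigma>\<^sup>2 * \<sigma>\<^sup>2 - (\<rho> * \<sigma>\<^sup>2)\<^sup>2"
  have d: "d = \<sigma>^4 * (1 - \<rho>\<^sup>2)" by (simp add: d_def algebra_simps power2_eq_square power4_eq_xxxx)
  have dpos: "d > 0" using d sig rho2 by simp
  define q where "q = (\<sigma>\<^sup>2 * a\<^sup>2 - 2 * (\<rho> * \<sigma>\<^sup>2) * a * b + \<sigma>\<^sup>2 * b\<^sup>2) / d"
  have bv1: "bv x y = Gamma ((\<delta> + 2) / 2) / (Gamma (\<delta> / 2) * \<delta> * pi * sqrt d) * (1 + q / \<delta>) powr (- ((\<delta> + 2) / 2))"
    unfolding bv_def bvt_dens_def Let_def a_def b_def q_def d_def by simp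
  have key: "1 + q / \<delta> = K x * (1 + ((y - nu x) / sc x)\<^sup>2)"
  proof -
    have "K x * (1 + ((y - nu x) / sc x)\<^sup>2) = K x + (b - \<rho> * a)\<^sup>2 / (\<sigma>\<^sup>2 * (1 - \<rho>\<^sup>2) * \<delta>)"
    proof -
      define A where "A = \<sigma>\<^sup>2 * (1 - \<rho>\<^sup>2) * \<delta>"
      have A: "A > 0" using sig del rho2 by (simp add: A_def)
      have "((y - nu x) / sc x)\<^sup>2 = (b - \<rho> * a)\<^sup>2 / (A * K x)"
        by (simp add: power_divide sc2 A_def nu_def a_def b_def algebra_simps)
      then have "K x * (1 + ((y - nu x) / sc x)\<^sup>2) = K x + (b - \<rho> * a)\<^sup>2 / A"
        using A K_pos[of x] by (simp add: field_simps)
      then show ?thesis by (simp add: A_def)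
    qed
    also have "\<dots> = 1 + q / \<delta>"
      using sig del rho2 dpos unfolding K_def q_def d power_divide S2 a_def b_def
      by (simp add: field_simps) (simp add: power2_eq_square power4_eq_xxxx algebra_simps)
    finally show ?thesis by simp
  qed
  show ?thesis
    unfolding bv1 key P_def C0_def cc_def d_def[symmetric]
    using K_pos[of x] by (simp add: powr_mult add_pos_nonneg)
qed

lemma m_eq: "m x = Cm * K x powr (- ((\<delta> + 1) / 2))"
  unfolding m_def t_dens_def Cm_def K_def power_divide S2 by (simp add: mult.commute)

lemma gpos: "Gamma (\<delta> / 2) > 0" "Gamma ((\<delta> + 1) / 2) > 0" "Gamma ((\<delta> + 2) / 2) > 0"
  using del by (auto intro!: Gamma_real_pos)

lemma sqrt_d: "sqrt (\<sigma>\<^sup>2 * \<sigma>\<^sup>2 - (\<rho> * \<sigma>\<^sup>2)\<^sup>2) = \<sigma>\<^sup>2 * sqrt (1 - \<rho>\<^sup>2)"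
proof -
  have "\<sigma>\<^sup>2 * \<sigma>\<^sup>2 - (\<rho> * \<sigma>\<^sup>2)\<^sup>2 = (\<sigma>\<^sup>2)\<^sup>2 * (1 - \<rho>\<^sup>2)"
    by (simp add: algebra_simps power2_eq_square)
  then show ?thesis by (simp only: real_sqrt_mult real_sqrt_abs abs_power2)
qed

lemma Beta_cc: "Beta (1/2) (cc - 1/2) = sqrt pi * Gamma ((\<delta> + 1) / 2) / Gamma ((\<delta> + 2) / 2)"
proof -
  have e1: "(\<delta> + 2) / 2 - 1/2 = (\<delta> + 1) / 2" and e2: "1/2 + (\<delta> + 1) / 2 = (\<delta> + 2) / 2"
    by (simp_all add: field_simps)
  show ?thesis unfolding cc_def Beta_def e1 e2 by (simp add: Gamma_one_half_real)
qed

lemma Pm: "P x * sc x * Beta (1/2) (cc - 1/2) = m x"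
proof -
  have k: "K x powr (- cc) * sqrt (K x) = K x powr (- ((\<delta> + 1) / 2))"
  proof -
    have e: "1/2 - cc = - ((\<delta> + 1) / 2)" by (simp add: cc_def field_simps)
    show ?thesis
      using K_pos[of x] by (simp add: powr_half_sqrt[symmetric] powr_add[symmetric] e)
  qed
  have c: "C0 * (\<sigma> * sqrt ((1 - \<rho>\<^sup>2) * \<delta>)) * (sqrt pi * Gamma ((\<delta> + 1) / 2) / Gamma ((\<delta> + 2) / 2)) = Cm"
  proof -
    have sd: "sqrt \<delta> * sqrt \<delta> = \<delta>" using del by simp
    have sp: "sqrt pi * sqrt pi = pi" by simp
    have "C0 * (\<sigma> * sqrt ((1 - \<rho>\<^sup>2) * \<delta>)) * (sqrt pi * Gamma ((\<delta> + 1) / 2) / Gamma ((\<delta> + 2) / 2))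
        = Gamma ((\<delta> + 1) / 2) * (sqrt \<delta> * sqrt pi) / (Gamma (\<delta> / 2) * \<delta> * pi * \<sigma>)"
    proof -
      have s1: "sqrt ((1 - \<rho>\<^sup>2) * \<delta>) = sqrt (1 - \<rho>\<^sup>2) * sqrt \<delta>" by (simp add: real_sqrt_mult)
      have n1: "Gamma ((\<delta> + 2) / 2) \<noteq> 0" using gpos(3) by linarith
      have n2: "Gamma (\<delta> / 2) \<noteq> 0" using gpos(1) by linarith
      have n: "sqrt (1 - \<rho>\<^sup>2) \<noteq> 0" "\<sigma> \<noteq> 0" "\<delta> \<noteq> 0"
        using sig rho2 del by auto
      note n = n n1 n2
      show ?thesis unfolding C0_def sqrt_d s1 using n
        by (simp add: field_simps power2_eq_square del: real_sqrt_eq_zero_cancel_iff)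
    qed
    also have "\<dots> = Gamma ((\<delta> + 1) / 2) * (sqrt \<delta> * sqrt pi) / (Gamma (\<delta> / 2) * (sqrt \<delta> * sqrt \<delta>) * (sqrt pi * sqrt pi) * \<sigma>)"
      by (simp only: sd sp)
    also have "\<dots> = Gamma ((\<delta> + 1) / 2) / (\<sigma> * sqrt \<delta> * sqrt pi * Gamma (\<delta> / 2))"
    proof -
      have n: "sqrt \<delta> \<noteq> 0" "sqrt pi \<noteq> 0" "\<sigma> \<noteq> 0" using sig del by auto
      have n2: "Gamma (\<delta> / 2) \<noteq> 0" using gpos(1) by linarith
      show ?thesis using aux_fr[OF n n2] .
    qed
    also have "\<dots> = Cm"
    proof -
      have "sqrt (\<sigma>\<^sup>2 * \<delta> * pi) = \<sigma> * sqrt \<delta> * sqrt pi" using sig by (simp add: real_sqrt_mult)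
      then show ?thesis unfolding Cm_def by simp
    qed
    finally show ?thesis .
  qed
  have "P x * sc x * Beta (1/2) (cc - 1/2) = (C0 * (\<sigma> * sqrt ((1 - \<rho>\<^sup>2) * \<delta>)) * (sqrt pi * Gamma ((\<delta> + 1) / 2) / Gamma ((\<delta> + 2) / 2))) * (K x powr (- cc) * sqrt (K x))"
    unfolding P_def sc_def Beta_cc by (simp add: ac_simps)
  also have "\<dots> = m x" unfolding c k m_eq ..
  finally show ?thesis .
qed

lemma inner0: "integrable lborel (\<lambda>y. bv x y)" "(\<integral>y. bv x y \<partial>lborel) = m x"
proof -
  have cc: "cc > 1/2" using del by (simp add: cc_def)
  note a = affine_int[OF sc_pos[of x] kern_int(1)[OF cc], of "nu x"]
  show "integrable lborel (\<lambda>y. bv x y)" unfolding bv_decomp using a(1) by simp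
  show "(\<integral>y. bv x y \<partial>lborel) = m x" unfolding bv_decomp using a(2) kern_int(2)[OF cc] Pm[of x] by simp
qed

lemma inner1: "integrable lborel (\<lambda>y. (y - nu x) * bv x y)" "(\<integral>y. (y - nu x) * bv x y \<partial>lborel) = 0"
proof -
  have cc: "cc > 1" using del by (simp add: cc_def)
  note a = affine_int[OF sc_pos[of x] kern_abs_int(2)[OF cc], of "nu x"]
  have e: "(\<lambda>y. (y - nu x) * bv x y) = (\<lambda>y. (P x * sc x) * ((y - nu x) / sc x * (1 + ((y - nu x) / sc x)\<^sup>2) powr (-cc)))"
    using sc_pos[of x] by (auto simp: bv_decomp fun_eq_iff field_simps)
  show "integrable lborel (\<lambda>y. (y - nu x) * bv x y)" unfolding e by (rule integrable_mult_right[OF a(1)])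
  show "(\<integral>y. (y - nu x) * bv x y \<partial>lborel) = 0" unfolding e integral_mult_right_zero a(2) kern_abs_int(3)[OF cc] by simp
qed

definition "Mabs = (\<integral>t. \<bar>t\<bar> * (1 + t\<^sup>2) powr (-cc) \<partial>lborel)"

lemma inner_abs: "integrable lborel (\<lambda>y. \<bar>y - nu x\<bar> * bv x y)"
   "(\<integral>y. \<bar>y - nu x\<bar> * bv x y \<partial>lborel) = P x * (sc x)\<^sup>2 * Mabs"
proof -
  have cc: "cc > 1" using del by (simp add: cc_def)
  note a = affine_int[OF sc_pos[of x] kern_abs_int(1)[OF cc], of "nu x"]
  have e: "(\<lambda>y. \<bar>y - nu x\<bar> * bv x y) = (\<lambda>y. (P x * sc x) * (\<bar>(y - nu x) / sc x\<bar> * (1 + ((y - nu x) / sc x)\<^sup>2) powr (-cc)))"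
    using sc_pos[of x] by (auto simp: bv_decomp fun_eq_iff field_simps abs_div)
  show "integrable lborel (\<lambda>y. \<bar>y - nu x\<bar> * bv x y)" unfolding e by (rule integrable_mult_right[OF a(1)])
  show "(\<integral>y. \<bar>y - nu x\<bar> * bv x y \<partial>lborel) = P x * (sc x)\<^sup>2 * Mabs" unfolding e integral_mult_right_zero a(2)
    by (simp add: Mabs_def power2_eq_square)
qed

lemma Beta_m: "Beta (1/2) ((\<delta> + 1) / 2 - 1/2) = sqrt pi * Gamma (\<delta> / 2) / Gamma ((\<delta> + 1) / 2)"
proof -
  have e1: "(\<delta> + 1) / 2 - 1/2 = \<delta> / 2" and e2: "1/2 + \<delta> / 2 = (\<delta> + 1) / 2"
    by (simp_all add: field_simps)
  show ?thesis unfolding Beta_def e1 e2 by (simp add: Gamma_one_half_real)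
qed

lemma m_eq2: "m x = Cm * (1 + ((x - \<mu>) / S)\<^sup>2) powr (- ((\<delta> + 1) / 2))"
  using m_eq K_def by simp

lemma m_int: "integrable lborel m" "integral\<^sup>L lborel m = 1"
proof -
  have c: "(\<delta> + 1) / 2 > 1/2" using del by simp
  note a = affine_int[OF S_pos kern_int(1)[OF c], of \<mu>]
  have e: "m = (\<lambda>x. Cm * (1 + ((x - \<mu>) / S)\<^sup>2) powr (- ((\<delta> + 1) / 2)))"
    using m_eq2 by auto
  show "integrable lborel m" unfolding e using a(1) by simp
  have "integral\<^sup>L lborel m = Cm * (S * (sqrt pi * Gamma (\<delta> / 2) / Gamma ((\<delta> + 1) / 2)))"
    unfolding e using a(2) kern_int(2)[OF c] Beta_m by simp
  also have "\<dots> = 1"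
  proof -
    have n1: "Gamma ((\<delta> + 1) / 2) \<noteq> 0" using gpos(2) by linarith
    have n2: "Gamma (\<delta> / 2) \<noteq> 0" using gpos(1) by linarith
    have "sqrt (\<sigma>\<^sup>2 * \<delta> * pi) = \<sigma> * sqrt \<delta> * sqrt pi" using sig by (simp add: real_sqrt_mult)
    then show ?thesis unfolding Cm_def S_def using n1 n2 sig del by (simp add: field_simps)
  qed
  finally show "integral\<^sup>L lborel m = 1" .
qed

lemma m1_int: "integrable lborel (\<lambda>x. (x - \<mu>) * m x)"
proof -
  have c: "(\<delta> + 1) / 2 > 1" using del by simp
  note a = affine_int[OF S_pos kern_abs_int(2)[OF c], of \<mu>]
  have e: "(\<lambda>x. (x - \<mu>) * m x) = (\<lambda>x. (Cm * S) * ((x - \<mu>) / S * (1 + ((x - \<mu>) / S)\<^sup>2) powr (- ((\<delta> + 1) / 2))))"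
    using S_pos by (auto simp: m_eq2 fun_eq_iff field_simps)
  show ?thesis unfolding e by (rule integrable_mult_right[OF a(1)])
qed

lemma Psc_int: "integrable lborel (\<lambda>x. P x * (sc x)\<^sup>2)"
proof -
  have c: "\<delta> / 2 > 1/2" using del by simp
  note a = affine_int[OF S_pos kern_int(1)[OF c], of \<mu>]
  have e: "P x * (sc x)\<^sup>2 = (C0 * \<sigma>\<^sup>2 * (1 - \<rho>\<^sup>2) * \<delta>) * (1 + ((x - \<mu>) / S)\<^sup>2) powr (- (\<delta> / 2))" for x
  proof -
    have e1: "- cc + 1 = - (\<delta> / 2)" by (simp add: cc_def field_simps)
    have "K x powr (- cc) * K x = K x powr (- cc) * K x powr 1" using K_pos[of x] by simp
    also have "\<dots> = K x powr (- (\<delta> / 2))" unfolding powr_add[symmetric] e1 ..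
    finally have "K x powr (- cc) * K x = K x powr (- (\<delta> / 2))" .
    then show ?thesis unfolding P_def sc2 by (simp add: K_def ac_simps)
  qed
  show ?thesis unfolding e using a(1) by simp
qed

end

context bvt_setup
begin

lemma bv_meas: "(\<lambda>p. bv (fst p) (snd p)) \<in> borel_measurable (lborel \<Otimes>\<^sub>M lborel)"
  unfolding bv_def bvt_dens_def Let_def by measurable

lemma C0_pos: "C0 > 0"
  unfolding C0_def sqrt_d using gpos sig del rho2 by (simp add: divide_pos_pos)

lemma bv_nonneg: "bv x y \<ge> 0"
  unfolding bv_decomp P_def using C0_pos by simp

lemma m_nonneg: "m x \<ge> 0"
  unfolding m_eq Cm_def using gpos sig del by (intro mult_nonneg_nonneg divide_nonneg_nonneg) (auto intro!: mult_nonneg_nonneg)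

lemma Mabs_nonneg: "Mabs \<ge> 0"
  unfolding Mabs_def by (intro Bochner_Integration.integral_nonneg) auto

lemma P_nonneg: "P x \<ge> 0"
  unfolding P_def using C0_pos by simp

lemma inner_sum: "integrable lborel (\<lambda>y. (x + y) * bv x y)"
  "(\<integral>y. (x + y) * bv x y \<partial>lborel) = (x + nu x) * m x"
proof -
  have e: "(\<lambda>y. (x + y) * bv x y) = (\<lambda>y. (x + nu x) * bv x y + (y - nu x) * bv x y)"
    by (auto simp: fun_eq_iff algebra_simps)
  show "integrable lborel (\<lambda>y. (x + y) * bv x y)" unfolding e
    using inner0(1) inner1(1) by (intro Bochner_Integration.integrable_add integrable_mult_right) auto
  show "(\<integral>y. (x + y) * bv x y \<partial>lborel) = (x + nu x) * m x" unfolding e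
    using inner0 inner1 by (subst Bochner_Integration.integral_add) auto
qed

lemma inner_absb: "integrable lborel (\<lambda>y. \<bar>x + y\<bar> * bv x y)"
  "(\<integral>y. \<bar>x + y\<bar> * bv x y \<partial>lborel) \<le> \<bar>x + nu x\<bar> * m x + P x * (sc x)\<^sup>2 * Mabs"
proof -
  have i2: "integrable lborel (\<lambda>y. \<bar>x + nu x\<bar> * bv x y + \<bar>y - nu x\<bar> * bv x y)"
    using inner0(1) inner_abs(1) by (intro Bochner_Integration.integrable_add integrable_mult_right) auto
  have ee: "(\<lambda>y. \<bar>x + y\<bar> * bv x y) = (\<lambda>y. \<bar>(x + y) * bv x y\<bar>)"
    by (auto simp: abs_mult bv_nonneg fun_eq_iff)
  show i1: "integrable lborel (\<lambda>y. \<bar>x + y\<bar> * bv x y)"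
    unfolding ee by (rule integrable_abs[OF inner_sum(1)])
  have "(\<integral>y. \<bar>x + y\<bar> * bv x y \<partial>lborel) \<le> (\<integral>y. \<bar>x + nu x\<bar> * bv x y + \<bar>y - nu x\<bar> * bv x y \<partial>lborel)"
  proof (rule integral_mono[OF i1 i2])
    fix y
    have "\<bar>x + y\<bar> \<le> \<bar>x + nu x\<bar> + \<bar>y - nu x\<bar>" by linarith
    then show "\<bar>x + y\<bar> * bv x y \<le> \<bar>x + nu x\<bar> * bv x y + \<bar>y - nu x\<bar> * bv x y"
      using bv_nonneg[of x y] by (simp add: mult_right_mono flip: distrib_right)
  qed
  also have "\<dots> = \<bar>x + nu x\<bar> * m x + P x * (sc x)\<^sup>2 * Mabs"
    using inner0 inner_abs by (subst Bochner_Integration.integral_add) auto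
  finally show "(\<integral>y. \<bar>x + y\<bar> * bv x y \<partial>lborel) \<le> \<bar>x + nu x\<bar> * m x + P x * (sc x)\<^sup>2 * Mabs" .
qed

lemma xnu_int: "integrable lborel (\<lambda>x. (x + nu x) * m x)"
proof -
  have e: "(\<lambda>x. (x + nu x) * m x) = (\<lambda>x. 2 * \<mu> * m x + (1 + \<rho>) * ((x - \<mu>) * m x))"
    by (auto simp: fun_eq_iff nu_def algebra_simps)
  show ?thesis unfolding e using m_int(1) m1_int
    by (intro Bochner_Integration.integrable_add integrable_mult_right) auto
qed

definition "G z x y = bv x y * ((x + y) * indicator {z<..} x)"

lemma G_meas: "(\<lambda>p. G z (fst p) (snd p)) \<in> borel_measurable (lborel \<Otimes>\<^sub>M lborel)"
  unfolding G_def using bv_meas by measurable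

lemma fubini: "integrable (lborel \<Otimes>\<^sub>M lborel) (\<lambda>p. G z (fst p) (snd p))"
  "integral\<^sup>L (lborel \<Otimes>\<^sub>M lborel) (\<lambda>p. G z (fst p) (snd p)) = (\<integral>x. indicator {z<..} x * ((x + nu x) * m x) \<partial>lborel)"
proof -
  have Gm: "(\<lambda>p. G z (fst p) (snd p)) \<in> borel_measurable (lborel \<Otimes>\<^sub>M lborel)" by (rule G_meas)
  have nG: "(\<integral>y. norm (G z x y) \<partial>lborel) = indicator {z<..} x * (\<integral>y. \<bar>x + y\<bar> * bv x y \<partial>lborel)" for x
  proof -
    have "(\<lambda>y. norm (G z x y)) = (\<lambda>y. indicator {z<..} x * (\<bar>x + y\<bar> * bv x y))"
      using bv_nonneg[of x] by (auto simp: fun_eq_iff G_def abs_mult indicator_def)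
    then show ?thesis by simp
  qed
  have Bi: "integrable lborel (\<lambda>x. \<bar>(x + nu x) * m x\<bar> + P x * (sc x)\<^sup>2 * Mabs)"
    using xnu_int Psc_int by (intro Bochner_Integration.integrable_add integrable_mult_left integrable_abs) auto
  have nm: "(\<lambda>x. \<integral>y. norm (G z x y) \<partial>lborel) \<in> borel_measurable lborel"
  proof -
    have "case_prod (\<lambda>x y. norm (G z x y)) \<in> borel_measurable (lborel \<Otimes>\<^sub>M lborel)"
      using Gm by (simp add: case_prod_beta')
    then show ?thesis by (rule lborel.borel_measurable_lebesgue_integral)
  qed
  have integ1: "integrable lborel (\<lambda>x. \<integral>y. norm (G z x y) \<partial>lborel)"
  proof (rule Bochner_Integration.integrable_bound[OF Bi nm], rule AE_I2)
    fix x
    have a: "0 \<le> (\<integral>y. \<bar>x + y\<bar> * bv x y \<partial>lborel)" using bv_nonneg[of x] by (intro Bochner_Integration.integral_nonneg) auto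
    have b: "(\<integral>y. \<bar>x + y\<bar> * bv x y \<partial>lborel) \<le> \<bar>(x + nu x) * m x\<bar> + P x * (sc x)\<^sup>2 * Mabs"
      using inner_absb(2)[of x] m_nonneg[of x] by (simp add: abs_mult)
    have c: "0 \<le> P x * (sc x)\<^sup>2 * Mabs"
      using Mabs_nonneg P_nonneg[of x] by simp
    show "norm (\<integral>y. norm (G z x y) \<partial>lborel) \<le> norm (\<bar>(x + nu x) * m x\<bar> + P x * (sc x)\<^sup>2 * Mabs)"
      unfolding nG using a b c by (auto simp: indicator_def)
  qed
  have integ2: "AE x in lborel. integrable lborel (\<lambda>y. G z x y)"
  proof (rule AE_I2)
    fix x
    show "integrable lborel (\<lambda>y. G z x y)"
      unfolding G_def using integrable_mult_right[OF inner_sum(1)[of x], of "indicator {z<..} x"]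
      by (simp add: ac_simps)
  qed
  show fi: "integrable (lborel \<Otimes>\<^sub>M lborel) (\<lambda>p. G z (fst p) (snd p))"
    by (rule lborel_pair.Fubini_integrable[OF Gm]) (use integ1 integ2 in simp_all)
  have "integral\<^sup>L (lborel \<Otimes>\<^sub>M lborel) (\<lambda>p. G z (fst p) (snd p)) = (\<integral>x. (\<integral>y. G z x y \<partial>lborel) \<partial>lborel)"
    using lborel_pair.integral_fst'[OF fi] by simp
  also have "\<dots> = (\<integral>x. indicator {z<..} x * ((x + nu x) * m x) \<partial>lborel)"
  proof (rule Bochner_Integration.integral_cong[OF refl])
    fix x
    have "(\<lambda>y. G z x y) = (\<lambda>y. indicator {z<..} x * ((x + y) * bv x y))"
      by (auto simp: fun_eq_iff G_def)
    then show "(\<integral>y. G z x y \<partial>lborel) = indicator {z<..} x * ((x + nu x) * m x)"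
      using inner_sum(2)[of x] by simp
  qed
  finally show "integral\<^sup>L (lborel \<Otimes>\<^sub>M lborel) (\<lambda>p. G z (fst p) (snd p)) = (\<integral>x. indicator {z<..} x * ((x + nu x) * m x) \<partial>lborel)" .
qed

end

context bvt_setup
begin
lemma K_deriv: "(K has_real_derivative (2 * (x - \<mu>) / S\<^sup>2)) (at x)"
proof -
  have d1: "((\<lambda>x. 1 + ((x - \<mu>) / S)\<^sup>2) has_real_derivative (2 * ((x - \<mu>) / S) * (1 / S))) (at x)"
    using S_pos by (auto intro!: derivative_eq_intros)
  have eq: "2 * ((x - \<mu>) / S) * (1 / S) = 2 * (x - \<mu>) / S\<^sup>2"
    by (simp add: power2_eq_square)
  show ?thesis using d1 unfolding eq K_def[abs_def] .
qed

definition "F x = - (Cm * \<sigma>\<^sup>2 * \<delta> / (\<delta> - 1)) * K x powr (- ((\<delta> - 1) / 2))"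

lemma F_deriv: "(F has_real_derivative ((x - \<mu>) * m x)) (at x)"
proof -
  have d: "((\<lambda>x. K x powr (- ((\<delta> - 1) / 2))) has_real_derivative
      (- ((\<delta> - 1) / 2) * K x powr (- ((\<delta> - 1) / 2) - 1)) * (2 * (x - \<mu>) / S\<^sup>2)) (at x)"
    by (rule DERIV_chain2[OF has_real_derivative_powr[OF K_pos] K_deriv])
  have e: "- ((\<delta> - 1) / 2) - 1 = - ((\<delta> + 1) / 2)" by (simp add: field_simps)
  have der: "(F has_real_derivative (- (Cm * \<sigma>\<^sup>2 * \<delta> / (\<delta> - 1))) *
      ((- ((\<delta> - 1) / 2) * K x powr (- ((\<delta> + 1) / 2))) * (2 * (x - \<mu>) / S\<^sup>2))) (at x)"
    unfolding F_def[abs_def] by (rule DERIV_cmult[OF d[unfolded e]])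
  have eq: "(- (Cm * \<sigma>\<^sup>2 * \<delta> / (\<delta> - 1))) *
      ((- ((\<delta> - 1) / 2) * K x powr (- ((\<delta> + 1) / 2))) * (2 * (x - \<mu>) / S\<^sup>2)) = (x - \<mu>) * m x"
  proof -
    have n: "\<delta> - 1 \<noteq> 0" "\<sigma> \<noteq> 0" "\<delta> \<noteq> 0" using del sig by auto
    show ?thesis unfolding S2 m_eq using n by (simp add: field_simps)
  qed
  show ?thesis using der unfolding eq .
qed

lemma m_cont: "isCont m x"
proof -
  have e: "m = (\<lambda>x. Cm * (1 + ((x - \<mu>) / S)\<^sup>2) powr (- ((\<delta> + 1) / 2)))"
    using m_eq2 by auto
  have p: "\<And>x. 0 < 1 + ((x - \<mu>) / S)\<^sup>2" using K_pos unfolding K_def .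
  show ?thesis unfolding e
    apply (intro continuous_intros) using S_pos p by (metis less_irrefl)+
qed

lemma lin_top: "filterlim (\<lambda>x. (x - \<mu>) / S) at_top at_top"
proof -
  have l: "filterlim (\<lambda>x. x - \<mu>) at_top at_top" by real_asymp
  have "filterlim (\<lambda>x. (1 / S) * (x - \<mu>)) at_top at_top"
    by (rule filterlim_tendsto_pos_mult_at_top[OF tendsto_const _ l]) (use S_pos in simp)
  then show ?thesis by simp
qed

lemma sq_ge: "(t::real) \<le> 1 + t\<^sup>2"
proof -
  have "0 \<le> (t - 1)\<^sup>2" by simp
  moreover have "(t - 1)\<^sup>2 = t\<^sup>2 - 2 * t + 1" by (simp add: power2_eq_square algebra_simps)
  ultimately show ?thesis by (smt (verit) zero_le_power2)
qed

lemma K_top: "filterlim K at_top at_top"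
  by (rule filterlim_at_top_mono[OF lin_top]) (auto simp: K_def sq_ge)

lemma upper_int: "(\<integral>x. indicator {z<..} x * ((x - \<mu>) * m x) \<partial>lborel) = - F z"
proof -
  have si: "set_integrable lborel (einterval (ereal z) \<infinity>) (\<lambda>x. (x - \<mu>) * m x)"
    unfolding set_integrable_def einterval_eq_Ici
    by (rule integrable_mult_indicator[OF _ m1_int]) simp
  have A: "((F \<circ> real_of_ereal) \<longlongrightarrow> F z) (at_right (ereal z))"
    unfolding ereal_tendsto_simps
    using DERIV_isCont[OF F_deriv[of z]] unfolding isCont_def
    by (rule tendsto_mono[rotated]) (simp add: at_le)
  have B: "((F \<circ> real_of_ereal) \<longlongrightarrow> 0) (at_left \<infinity>)"
  proof -
    have "((\<lambda>x. K x powr (- ((\<delta> - 1) / 2))) \<longlongrightarrow> 0) at_top"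
      by (rule tendsto_neg_powr[OF _ K_top]) (use del in simp)
    then have "(F \<longlongrightarrow> 0) at_top" unfolding F_def by (rule tendsto_mult_right_zero)
    then show ?thesis unfolding ereal_tendsto_simps .
  qed
  have "(LBINT x=ereal z..\<infinity>. (x - \<mu>) * m x) = 0 - F z"
  proof -
    have Fd: "\<And>x. (F has_vector_derivative (x - \<mu>) * m x) (at x)"
      using F_deriv has_real_derivative_iff_has_vector_derivative by blast
    have fc: "\<And>x. isCont (\<lambda>x. (x - \<mu>) * m x) x" by (intro continuous_intros m_cont)
    have zi: "ereal z < \<infinity>" by simp
    show ?thesis by (rule interval_integral_FTC_integrable[OF zi Fd fc si A B])
  qed
  moreover have "(LBINT x=ereal z..\<infinity>. (x - \<mu>) * m x) = (LINT x:{z<..}|lborel. (x - \<mu>) * m x)"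
    unfolding interval_lebesgue_integral_def einterval_eq_Ici by simp
  moreover have "(LINT x:{z<..}|lborel. (x - \<mu>) * m x) = (\<integral>x. indicator {z<..} x * ((x - \<mu>) * m x) \<partial>lborel)"
    unfolding set_lebesgue_integral_def by simp
  ultimately show ?thesis by simp
qed

end

lemma aux2: "(a::real) \<noteq> 0 \<Longrightarrow> b \<noteq> 0 \<Longrightarrow> s \<noteq> 0 \<Longrightarrow> q \<noteq> 0 \<Longrightarrow> G \<noteq> 0 \<Longrightarrow>
  (a / 2 * H) / (s * q * (b / 2 * G)) * s\<^sup>2 * d / a = s * (d / b) * (H / (q * G))"
  by (simp add: field_simps power2_eq_square)

context bvt_setup
begin

lemma m_affine: "m (\<mu> + \<sigma> * w) * \<sigma> = t_dens \<delta> 0 1 w"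
proof -
  have a: "(\<mu> + \<sigma> * w - \<mu>)\<^sup>2 / (\<sigma>\<^sup>2 * \<delta>) = (w - 0)\<^sup>2 / (1 * \<delta>)"
    using sig by (simp add: power_mult_distrib)
  have b: "sqrt (\<sigma>\<^sup>2 * \<delta> * pi) = \<sigma> * sqrt (1 * \<delta> * pi)"
    using sig by (simp add: real_sqrt_mult)
  show ?thesis unfolding m_def t_dens_def a b using sig by simp
qed

lemma lower_cdf: "(\<integral>x. indicator {..z} x * m x \<partial>lborel) = t_cdf \<delta> 0 1 ((z - \<mu>) / \<sigma>)"
proof -
  have "(\<integral>x. indicator {..z} x * m x \<partial>lborel) = \<bar>\<sigma>\<bar> *\<^sub>R (\<integral>w. indicator {..z} (\<mu> + \<sigma> * w) * m (\<mu> + \<sigma> * w) \<partial>lborel)"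
    by (rule lborel_integral_real_affine) (use sig in simp)
  also have "\<dots> = (\<integral>w. \<sigma> * (indicator {..z} (\<mu> + \<sigma> * w) * m (\<mu> + \<sigma> * w)) \<partial>lborel)"
    using sig by simp
  also have "\<dots> = (\<integral>w. indicator {..(z - \<mu>) / \<sigma>} w * t_dens \<delta> 0 1 w \<partial>lborel)"
  proof (rule Bochner_Integration.integral_cong[OF refl])
    fix w
    have i: "indicator {..z} (\<mu> + \<sigma> * w) = (indicator {..(z - \<mu>) / \<sigma>} w :: real)"
      using sig by (auto simp: indicator_def field_simps)
    show "\<sigma> * (indicator {..z} (\<mu> + \<sigma> * w) * m (\<mu> + \<sigma> * w)) = indicator {..(z - \<mu>) / \<sigma>} w * t_dens \<delta> 0 1 w"
      unfolding i m_affine[symmetric] by simp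
  qed
  finally show ?thesis unfolding t_cdf_def .
qed

lemma upper_m: "(\<integral>x. indicator {z<..} x * m x \<partial>lborel) = 1 - t_cdf \<delta> 0 1 ((z - \<mu>) / \<sigma>)"
proof -
  have e: "(\<lambda>x. indicator {z<..} x * m x) = (\<lambda>x. m x - indicator {..z} x * m x)"
    by (auto simp: fun_eq_iff indicator_def)
  have i2: "integrable lborel (\<lambda>x. indicator {..z} x * m x)"
    using integrable_mult_indicator[OF _ m_int(1), of "{..z}"] by simp
  show ?thesis unfolding e
    using m_int i2 lower_cdf by (subst Bochner_Integration.integral_diff) auto
qed

lemma Fz: "- F z = \<sigma> * (\<delta> / (\<delta> - 2)) * t_dens (\<delta> - 2) 0 (\<delta> / (\<delta> - 2)) ((z - \<mu>) / \<sigma>)"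
proof -
  define w where "w = (z - \<mu>) / \<sigma>"
  have a: "\<delta> / (\<delta> - 2) * (\<delta> - 2) = \<delta>" using del by simp
  have b: "1 + (w - 0)\<^sup>2 / \<delta> = K z" unfolding K_def w_def S_def using sig del
    by (simp add: power_divide power_mult_distrib)
  have c: "- ((\<delta> - 2 + 1) / 2) = - ((\<delta> - 1) / 2)" "(\<delta> - 2 + 1) / 2 = (\<delta> - 1) / 2" by (simp_all add: field_simps)
  have g1: "Gamma ((\<delta> + 1) / 2) = (\<delta> - 1) / 2 * Gamma ((\<delta> - 1) / 2)"
  proof -
    have e1: "(\<delta> + 1) / 2 = (\<delta> - 1) / 2 + 1" by (simp add: field_simps)
    have nz: "(\<delta> - 1) / 2 \<notin> \<int>\<^sub>\<le>\<^sub>0" using del by (auto dest: nonpos_Ints_nonpos)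
    show ?thesis unfolding e1 by (rule Gamma_plus1[OF nz])
  qed
  have g2: "Gamma (\<delta> / 2) = (\<delta> - 2) / 2 * Gamma ((\<delta> - 2) / 2)"
  proof -
    have e1: "\<delta> / 2 = (\<delta> - 2) / 2 + 1" by (simp add: field_simps)
    have nz: "(\<delta> - 2) / 2 \<notin> \<int>\<^sub>\<le>\<^sub>0" using del by (auto dest: nonpos_Ints_nonpos)
    show ?thesis by (subst e1) (rule Gamma_plus1[OF nz])
  qed
  have gp: "Gamma ((\<delta> - 2) / 2) > 0" "Gamma ((\<delta> - 1) / 2) > 0" using del by (auto intro!: Gamma_real_pos)
  have sq: "sqrt (\<sigma>\<^sup>2 * \<delta> * pi) = \<sigma> * sqrt (\<delta> * pi)" using sig by (simp add: real_sqrt_mult)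
  have "- F z = Cm * \<sigma>\<^sup>2 * \<delta> / (\<delta> - 1) * K z powr (- ((\<delta> - 1) / 2))" by (simp add: F_def)
  also have "Cm * \<sigma>\<^sup>2 * \<delta> / (\<delta> - 1) = \<sigma> * (\<delta> / (\<delta> - 2)) * (Gamma ((\<delta> - 1) / 2) / (sqrt (\<delta> * pi) * Gamma ((\<delta> - 2) / 2)))"
  proof -
    have n0: "Gamma ((\<delta> - 2) / 2) \<noteq> 0" using gp(1) by linarith
    have n: "\<delta> - 1 \<noteq> 0" "\<delta> - 2 \<noteq> 0" "\<sigma> \<noteq> 0" "sqrt (\<delta> * pi) \<noteq> 0"
      using del sig by auto
    note n = n n0
    show ?thesis unfolding Cm_def sq g1 g2 by (rule aux2[OF n])
  qed
  finally show ?thesis unfolding t_dens_def a c b[unfolded w_def] by (simp add: ac_simps)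
qed

lemma outer: "(\<integral>x. indicator {z<..} x * ((x + nu x) * m x) \<partial>lborel) =
   2 * \<mu> * (1 - t_cdf \<delta> 0 1 ((z - \<mu>) / \<sigma>)) + \<sigma> * (1 + \<rho>) * (\<delta> / (\<delta> - 2)) * t_dens (\<delta> - 2) 0 (\<delta> / (\<delta> - 2)) ((z - \<mu>) / \<sigma>)"
proof -
  have e: "(\<lambda>x. indicator {z<..} x * ((x + nu x) * m x)) = (\<lambda>x. 2 * \<mu> * (indicator {z<..} x * m x) + (1 + \<rho>) * (indicator {z<..} x * ((x - \<mu>) * m x)))"
    by (auto simp: fun_eq_iff nu_def algebra_simps)
  have i1: "integrable lborel (\<lambda>x. indicator {z<..} x * m x)"
    using integrable_mult_indicator[OF _ m_int(1), of "{z<..}"] by simp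
  have i2: "integrable lborel (\<lambda>x. indicator {z<..} x * ((x - \<mu>) * m x))"
    using integrable_mult_indicator[OF _ m1_int, of "{z<..}"] by simp
  have "(\<integral>x. indicator {z<..} x * ((x + nu x) * m x) \<partial>lborel) = 2 * \<mu> * (\<integral>x. indicator {z<..} x * m x \<partial>lborel) + (1 + \<rho>) * (\<integral>x. indicator {z<..} x * ((x - \<mu>) * m x) \<partial>lborel)"
    unfolding e using i1 i2 by (subst Bochner_Integration.integral_add) auto
  also have "\<dots> = 2 * \<mu> * (1 - t_cdf \<delta> 0 1 ((z - \<mu>) / \<sigma>)) + (1 + \<rho>) * (- F z)"
    unfolding upper_m upper_int ..
  finally show ?thesis unfolding Fz by (simp add: ac_simps)
qed

end

lemma bvt_swap: "bvt_dens m m s r s d (y, x) = bvt_dens m m s r s d (x, y)"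
  unfolding bvt_dens_def Let_def by (simp add: algebra_simps)

lemma meas_cond_exp:
  assumes "prob_space M" and B: "B \<in> sets M"
  shows "measure M B * cond_exp_event M X B = (LINT \<omega>|M. X \<omega> * indicator B \<omega>)"
proof (cases "measure M B = 0")
  case True
  interpret prob_space M by fact
  have "B \<in> null_sets M" using True B by (simp add: emeasure_eq_measure null_sets_def)
  then have "AE \<omega> in M. X \<omega> * indicator B \<omega> = 0" by (rule AE_mp[OF AE_not_in]) (auto intro!: AE_I2)
  then have "(LINT \<omega>|M. X \<omega> * indicator B \<omega>) = 0" by (rule integral_eq_zero_AE)
  then show ?thesis using True by simp
next
  case False
  then show ?thesis unfolding cond_exp_event_def by simp
qed

context bvt_setup
begin

lemma expect_U:
  assumes dist: "distributed M lborel (\<lambda>\<omega>. (U \<omega>, V \<omega>))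
           (\<lambda>xy. ennreal (bvt_dens \<mu> \<mu> (\<sigma>\<^sup>2) (\<rho> * \<sigma>\<^sup>2) (\<sigma>\<^sup>2) \<delta> xy))"
  shows "(LINT \<omega>|M. (U \<omega> + V \<omega>) * indicator {\<omega>\<in>space M. z < U \<omega>} \<omega>) =
     (\<integral>x. indicator {z<..} x * ((x + nu x) * m x) \<partial>lborel)"
proof -
  define g where "g = (\<lambda>p::real \<times> real. (fst p + snd p) * indicator {z<..} (fst p))"
  have gm: "g \<in> borel_measurable lborel" unfolding g_def lborel_prod[symmetric] by measurable
  have nn: "\<And>p. p \<in> space lborel \<Longrightarrow> 0 \<le> bvt_dens \<mu> \<mu> (\<sigma>\<^sup>2) (\<rho> * \<sigma>\<^sup>2) (\<sigma>\<^sup>2) \<delta> p"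
    using bv_nonneg unfolding bv_def by (metis prod.collapse)
  have "(\<integral>p. bvt_dens \<mu> \<mu> (\<sigma>\<^sup>2) (\<rho> * \<sigma>\<^sup>2) (\<sigma>\<^sup>2) \<delta> p * g p \<partial>lborel) = (\<integral>\<omega>. g (U \<omega>, V \<omega>) \<partial>M)"
    by (rule distributed_integral[OF dist gm nn])
  also have "\<dots> = (LINT \<omega>|M. (U \<omega> + V \<omega>) * indicator {\<omega>\<in>space M. z < U \<omega>} \<omega>)"
    by (rule Bochner_Integration.integral_cong[OF refl]) (auto simp: g_def indicator_def)
  finally have 1: "(LINT \<omega>|M. (U \<omega> + V \<omega>) * indicator {\<omega>\<in>space M. z < U \<omega>} \<omega>) =
      (\<integral>p. bvt_dens \<mu> \<mu> (\<sigma>\<^sup>2) (\<rho> * \<sigma>\<^sup>2) (\<sigma>\<^sup>2) \<delta> p * g p \<partial>lborel)" ..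
  have 2: "(\<integral>p. bvt_dens \<mu> \<mu> (\<sigma>\<^sup>2) (\<rho> * \<sigma>\<^sup>2) (\<sigma>\<^sup>2) \<delta> p * g p \<partial>lborel) =
      integral\<^sup>L (lborel \<Otimes>\<^sub>M lborel) (\<lambda>p. G z (fst p) (snd p))"
    unfolding lborel_prod[symmetric] G_def g_def bv_def by simp
  show ?thesis unfolding 1 2 fubini(2) ..
qed

lemma expect_V:
  assumes dist: "distributed M lborel (\<lambda>\<omega>. (U \<omega>, V \<omega>))
           (\<lambda>xy. ennreal (bvt_dens \<mu> \<mu> (\<sigma>\<^sup>2) (\<rho> * \<sigma>\<^sup>2) (\<sigma>\<^sup>2) \<delta> xy))"
  shows "(LINT \<omega>|M. (U \<omega> + V \<omega>) * indicator {\<omega>\<in>space M. z < V \<omega>} \<omega>) =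
     (\<integral>x. indicator {z<..} x * ((x + nu x) * m x) \<partial>lborel)"
proof -
  define g where "g = (\<lambda>p::real \<times> real. (fst p + snd p) * indicator {z<..} (snd p))"
  have gm: "g \<in> borel_measurable lborel" unfolding g_def lborel_prod[symmetric] by measurable
  have nn: "\<And>p. p \<in> space lborel \<Longrightarrow> 0 \<le> bvt_dens \<mu> \<mu> (\<sigma>\<^sup>2) (\<rho> * \<sigma>\<^sup>2) (\<sigma>\<^sup>2) \<delta> p"
    using bv_nonneg unfolding bv_def by (metis prod.collapse)
  have "(\<integral>p. bvt_dens \<mu> \<mu> (\<sigma>\<^sup>2) (\<rho> * \<sigma>\<^sup>2) (\<sigma>\<^sup>2) \<delta> p * g p \<partial>lborel) = (\<integral>\<omega>. g (U \<omega>, V \<omega>) \<partial>M)"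
    by (rule distributed_integral[OF dist gm nn])
  also have "\<dots> = (LINT \<omega>|M. (U \<omega> + V \<omega>) * indicator {\<omega>\<in>space M. z < V \<omega>} \<omega>)"
    by (rule Bochner_Integration.integral_cong[OF refl]) (auto simp: g_def indicator_def)
  finally have 1: "(LINT \<omega>|M. (U \<omega> + V \<omega>) * indicator {\<omega>\<in>space M. z < V \<omega>} \<omega>) =
      (\<integral>p. bvt_dens \<mu> \<mu> (\<sigma>\<^sup>2) (\<rho> * \<sigma>\<^sup>2) (\<sigma>\<^sup>2) \<delta> p * g p \<partial>lborel)" ..
  define f where "f = (\<lambda>p. bv (fst p) (snd p) * ((fst p + snd p) * indicator {z<..} (snd p)))"
  have fm: "f \<in> borel_measurable (lborel \<Otimes>\<^sub>M lborel)" unfolding f_def using bv_meas by measurable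
  have 2: "(\<integral>p. bvt_dens \<mu> \<mu> (\<sigma>\<^sup>2) (\<rho> * \<sigma>\<^sup>2) (\<sigma>\<^sup>2) \<delta> p * g p \<partial>lborel) =
      integral\<^sup>L (lborel \<Otimes>\<^sub>M lborel) f"
    unfolding lborel_prod[symmetric] f_def g_def bv_def by simp
  have 3: "integral\<^sup>L (lborel \<Otimes>\<^sub>M lborel) f = (\<integral>(x,y). f (y, x) \<partial>(lborel \<Otimes>\<^sub>M lborel))"
    using lborel_pair.integral_product_swap[OF fm] by simp
  have 4: "(\<integral>(x,y). f (y, x) \<partial>(lborel \<Otimes>\<^sub>M lborel)) = integral\<^sup>L (lborel \<Otimes>\<^sub>M lborel) (\<lambda>p. G z (fst p) (snd p))"
    by (rule Bochner_Integration.integral_cong[OF refl])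
       (auto simp: f_def G_def bv_def bvt_swap split: prod.splits)
  show ?thesis unfolding 1 2 3 4 fubini(2) ..
qed

end

theorem lemma4:
  fixes M :: "'a measure" and A :: "'a \<Rightarrow> 'b" and U V :: "'a \<Rightarrow> real"
    and u v :: 'b and p_u p_v \<mu> \<sigma> \<rho> \<delta> z :: real
    and f :: "real \<Rightarrow> real"
  assumes "prob_space M"
    and "u \<noteq> v"
    and "A \<in> measurable M (count_space UNIV)"
    and "\<forall>\<omega>\<in>space M. A \<omega> \<in> {u, v}"
    and "measure M {\<omega>\<in>space M. A \<omega> = u} = p_u"
    and "measure M {\<omega>\<in>space M. A \<omega> = v} = p_v"
    and "p_u + p_v = 1"
    and "\<sigma> > 0" and "-1 < \<rho>" and "\<rho> < 1" and "\<delta> > 2"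
    and "distributed M lborel (\<lambda>\<omega>. (U \<omega>, V \<omega>))
           (\<lambda>xy. ennreal (bvt_dens \<mu> \<mu> (\<sigma>\<^sup>2) (\<rho> * \<sigma>\<^sup>2) (\<sigma>\<^sup>2) \<delta> xy))"
    and "prob_space.indep_set M (sets (vimage_algebra (space M) A (count_space UNIV)))
           (sets (vimage_algebra (space M) (\<lambda>\<omega>. (U \<omega>, V \<omega>)) (borel :: (real \<times> real) measure)))"
    and "\<And>z. f z =
           p_u * measure M {\<omega>\<in>space M. U \<omega> > z}
               * cond_exp_event M (\<lambda>\<omega>. U \<omega> + V \<omega>) {\<omega>\<in>space M. U \<omega> > z}
         + p_v * measure M {\<omega>\<in>space M. V \<omega> > z}
               * cond_exp_event M (\<lambda>\<omega>. U \<omega> + V \<omega>) {\<omega>\<in>space M. V \<omega> > z}"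
  shows "f z = 2 * \<mu> * (1 - t_cdf \<delta> 0 1 ((z - \<mu>) / \<sigma>))
              + \<sigma> * (1 + \<rho>) * (\<delta> / (\<delta> - 2))
                * t_dens (\<delta> - 2) 0 (\<delta> / (\<delta> - 2)) ((z - \<mu>) / \<sigma>)"
proof -
  interpret bvt_setup \<mu> \<sigma> \<rho> \<delta> by unfold_locales (use assms in auto)
  note dist = assms(12)
  have Xm: "(\<lambda>\<omega>. (U \<omega>, V \<omega>)) \<in> measurable M (lborel \<Otimes>\<^sub>M lborel)"
    using distributed_measurable[OF dist] unfolding lborel_prod .
  then have Um: "U \<in> borel_measurable M" and Vm: "V \<in> borel_measurable M"
    unfolding measurable_pair_iff by (simp_all add: comp_def)
  have BU: "{\<omega>\<in>space M. U \<omega> > z} \<in> sets M" using Um by measurable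
  have BV: "{\<omega>\<in>space M. V \<omega> > z} \<in> sets M" using Vm by measurable
  define R where "R = 2 * \<mu> * (1 - t_cdf \<delta> 0 1 ((z - \<mu>) / \<sigma>))
              + \<sigma> * (1 + \<rho>) * (\<delta> / (\<delta> - 2)) * t_dens (\<delta> - 2) 0 (\<delta> / (\<delta> - 2)) ((z - \<mu>) / \<sigma>)"
  have eU: "measure M {\<omega>\<in>space M. U \<omega> > z} * cond_exp_event M (\<lambda>\<omega>. U \<omega> + V \<omega>) {\<omega>\<in>space M. U \<omega> > z} = R"
    unfolding meas_cond_exp[OF assms(1) BU] R_def expect_U[OF dist] outer ..
  have eV: "measure M {\<omega>\<in>space M. V \<omega> > z} * cond_exp_event M (\<lambda>\<omega>. U \<omega> + V \<omega>) {\<omega>\<in>space M. V \<omega> > z} = R"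
    unfolding meas_cond_exp[OF assms(1) BV] R_def expect_V[OF dist] outer ..
  have "f z = p_u * R + p_v * R"
    using assms(14)[of z] eU eV by (simp add: mult.assoc)
  also have "\<dots> = R" using assms(7) by (simp flip: distrib_right)
  finally show ?thesis unfolding R_def .
qed

end
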